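(* Let $n>k\geq 1$ be integers, $r=n-k$, and let $k<d_1<d_2<\cdots<d_m\leq n-1$ be integers. Put $s_i=d_i-k+1$ for $i\in[m]$, $s=\mathrm{lcm}(s_1,\ldots,s_{m-1})$ (with $s=1$ if $m=1$), and $\ell=s\cdot s_m^n$. Let $F$ be a finite field with $|F|\geq s_m n$ and let $\lambda_{i,j}$, $i\in[n]$, $j\in[0,s_m-1]$, be $s_m n$ distinct elements of $F$. Let $\mathcal{C}_1$ be the set of all $(\bm c_1,\ldots,\bm c_n)$ with $\bm c_i=(c_{i,0},\ldots,c_{i,\ell-1})\in F^\ell$ satisfying $$\sum_{i=1}^n \lambda_{i,a_i}^{t-1} c_{i,(a,b)}=0\quad\text{for all } a\in[0,s_m^n-1],\ b\in[0,s-1],\ t\in[r].$$ Then $\mathcal{C}_1$ is an $(n,k,\ell)$ MDS array code satisfying the $(1,d_i)$-optimal repair property for every $i\in[m]$ simultaneously.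
   Context: Notation: $[n]=\{1,\ldots,n\}$ and $[i,j]=\{i,i+1,\ldots,j\}$. Each $\tau\in[0,\ell-1]$ is written uniquely as $\tau=b\cdot s_m^n+\sum_{i=1}^n a_i s_m^{i-1}$ with $b\in[0,s-1]$, $a_i\in[0,s_m-1]$; we write $a=(a_1,\ldots,a_n)=\sum_i a_i s_m^{i-1}\in[0,s_m^n-1]$ and $\tau=(a,b)$, so $c_{i,(a,b)}=c_{i,\tau}$. An $(n,k,\ell)$ MDS array code over $F$ is an $F$-linear set of vectors $(\bm c_1,\ldots,\bm c_n)$, $\bm c_i\in F^\ell$ (node $i$ stores $\bm c_i$), of dimension $k\ell$, such that any $k$ of the coordinates $\bm c_i$ determine the whole codeword. For $1\leq h\leq n-k$ and $k\leq d\leq n-h$, the code has the $(h,d)$-optimal repair property if for every $h$-subset $\mathcal{H}\subseteq[n]$ of failed nodes and every $d$-subset $\mathcal{R}\subseteq[n]\setminus\mathcal{H}$ of helper nodes, there is a scheme in which each helper $j\in\mathcal{R}$ sends $\beta=\frac{h\ell}{d-k+h}$ symbols of $F$ computed from $\bm c_j$ and from these $d\beta=\frac{dh\ell}{d-k+h}$ symbols in total all $\bm c_i$, $i\in\mathcal{H}$, can be determined, for every codeword (this meets the cut-set bound $\beta\geq \frac{h\ell}{d-k+h}$ with equality). For $h=1$ this is the MSR (optimal single-node repair) property with repair degree $d$. *)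

theory Defs
  imports Complex_Main "HOL-Library.Function_Algebras"
begin

text \<open>Array codewords over a field 'a: a codeword is c :: nat => nat => 'a, where
  c i t is the t-th symbol c_{i,t} stored on node i (nodes 1..n, symbols 0..ell-1);
  entries outside this range are required to be 0.  Vector space structure: pointwise.\<close>

definition arr_scale :: "'a::field \<Rightarrow> (nat \<Rightarrow> nat \<Rightarrow> 'a) \<Rightarrow> (nat \<Rightarrow> nat \<Rightarrow> 'a)" where
  "arr_scale x c = (\<lambda>i t. x * c i t)"

lemma vector_space_arr_scale: "vector_space (arr_scale :: 'a::field \<Rightarrow> _)"
  by unfold_locales (auto simp: arr_scale_def fun_eq_iff algebra_simps)

definition array_vectors :: "nat \<Rightarrow> nat \<Rightarrow> (nat \<Rightarrow> nat \<Rightarrow> 'a::zero) set" where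
  "array_vectors n ell = {c. \<forall>i t. (i \<notin> {1..n} \<or> ell \<le> t) \<longrightarrow> c i t = 0}"

definition MDS_array_code :: "nat \<Rightarrow> nat \<Rightarrow> nat \<Rightarrow> (nat \<Rightarrow> nat \<Rightarrow> 'a::field) set \<Rightarrow> bool" where
  "MDS_array_code n k ell C \<longleftrightarrow>
     C \<subseteq> array_vectors n ell \<and>
     module.subspace arr_scale C \<and>
     vector_space.dim arr_scale C = k * ell \<and>
     (\<forall>K. K \<subseteq> {1..n} \<and> card K = k \<longrightarrow>
        (\<forall>c\<in>C. \<forall>c'\<in>C. (\<forall>i\<in>K. c i = c' i) \<longrightarrow> c = c'))"

text \<open>(h,d)-optimal repair: for every h-set H of failed nodes and d-set R of helpers disjoint
  from H, each helper j sends beta = h*ell/(d-k+h) symbols f j (c j) 0, ..., f j (c j) (beta-1),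
  computed from c_j alone, and from these all c_i, i in H, are determined (via g).\<close>
definition optimal_repair :: "nat \<Rightarrow> nat \<Rightarrow> nat \<Rightarrow> (nat \<Rightarrow> nat \<Rightarrow> 'a::zero) set \<Rightarrow> nat \<Rightarrow> nat \<Rightarrow> bool" where
  "optimal_repair n k ell C h d \<longleftrightarrow>
     (\<forall>H R. H \<subseteq> {1..n} \<and> card H = h \<and> R \<subseteq> {1..n} - H \<and> card R = d \<longrightarrow>
        (\<exists>(f :: nat \<Rightarrow> (nat \<Rightarrow> 'a) \<Rightarrow> (nat \<Rightarrow> 'a)) (g :: (nat \<Rightarrow> nat \<Rightarrow> 'a) \<Rightarrow> nat \<Rightarrow> nat \<Rightarrow> 'a).
           \<forall>c\<in>C. \<forall>i\<in>H.
             c i = g (\<lambda>j u. if j \<in> R \<and> u < h * ell div (d - k + h) then f j (c j) u else 0) i))"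

text \<open>i-th base-q digit a_i (i \<ge> 1) of a = sum a_i q^(i-1).\<close>
definition digit :: "nat \<Rightarrow> nat \<Rightarrow> nat \<Rightarrow> nat" where
  "digit q a i = (a div q ^ (i - 1)) mod q"

end

theory Submission
  imports Defs "HOL-Computational_Algebra.Polynomial" "HOL-Library.FuncSet"
begin


lemma vand_zero:
  fixes z w :: "'b \<Rightarrow> 'a::field"
  assumes P: "finite P" and inj: "inj_on z P" and cP: "card P \<le> r"
    and eq: "\<forall>\<tau><r. (\<Sum>p\<in>P. z p ^ \<tau> * w p) = 0" and q: "q \<in> P"
  shows "w q = 0"
proof -
  define Q where "Q = (\<Prod>p\<in>P-{q}. [:- z p, 1:])"
  have "degree Q \<le> (\<Sum>p\<in>P-{q}. degree [:- z p, 1:])"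
    unfolding Q_def using degree_prod_sum_le[of "P-{q}" "\<lambda>p. [:- z p, 1:]"] P by (simp add: o_def)
  also have "\<dots> = card (P - {q})" by simp
  also have "\<dots> < r"
  proof -
    have "card P > 0" using P q by (auto simp: card_gt_0_iff)
    thus ?thesis using cP q P by (simp add: card_Diff_singleton)
  qed
  finally have deg: "degree Q < r" .
  have polyQ: "poly Q x = (\<Sum>\<tau><r. coeff Q \<tau> * x ^ \<tau>)" for x
  proof -
    have "poly Q x = (\<Sum>\<tau>\<le>degree Q. coeff Q \<tau> * x ^ \<tau>)" by (rule poly_altdef)
    also have "\<dots> = (\<Sum>\<tau><r. coeff Q \<tau> * x ^ \<tau>)"
      by (rule sum.mono_neutral_left) (use deg in \<open>auto simp: coeff_eq_0\<close>)
    finally show ?thesis .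
  qed
  have "(\<Sum>p\<in>P. poly Q (z p) * w p) = (\<Sum>\<tau><r. coeff Q \<tau> * (\<Sum>p\<in>P. z p ^ \<tau> * w p))"
    by (simp add: polyQ sum_distrib_left sum_distrib_right sum.swap[of _ P] mult.assoc)
  also have "\<dots> = 0" using eq by simp
  finally have s0: "(\<Sum>p\<in>P. poly Q (z p) * w p) = 0" .
  have "(\<Sum>p\<in>P. poly Q (z p) * w p) = poly Q (z q) * w q + (\<Sum>p\<in>P-{q}. poly Q (z p) * w p)"
    using P q by (simp add: sum.remove)
  also have "(\<Sum>p\<in>P-{q}. poly Q (z p) * w p) = 0"
    by (rule sum.neutral) (use P in \<open>auto simp: Q_def poly_prod\<close>)
  finally have "poly Q (z q) * w q = 0" using s0 by simp
  moreover have "poly Q (z q) \<noteq> 0"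
    using P inj q by (auto simp: Q_def poly_prod inj_on_def)
  ultimately show ?thesis by simp
qed

lemma vand_surj:
  fixes z :: "'b \<Rightarrow> 'a::{field,finite}"
  assumes P: "finite P" and inj: "inj_on z P" and cP: "card P = r"
  shows "\<exists>w. \<forall>\<tau><r. (\<Sum>p\<in>P. z p ^ \<tau> * w p) = y \<tau>"
proof -
  define A where "A = (PiE P (\<lambda>_. UNIV :: 'a set))"
  define B where "B = (PiE {..<r} (\<lambda>_. UNIV :: 'a set))"
  define \<Phi> where "\<Phi> w = restrict (\<lambda>\<tau>. \<Sum>p\<in>P. z p ^ \<tau> * w p) {..<r}" for w
  have sub: "\<Phi> ` A \<subseteq> B" unfolding \<Phi>_def B_def by (intro image_subsetI) (simp add: restrict_PiE_iff)
  have injP: "inj_on \<Phi> A"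
  proof (rule inj_onI)
    fix w w' assume w: "w \<in> A" and w': "w' \<in> A" and e: "\<Phi> w = \<Phi> w'"
    have "\<forall>\<tau><r. (\<Sum>p\<in>P. z p ^ \<tau> * (w p - w' p)) = 0"
    proof (intro allI impI)
      fix \<tau> assume "\<tau> < r"
      hence "(\<Sum>p\<in>P. z p ^ \<tau> * w p) = (\<Sum>p\<in>P. z p ^ \<tau> * w' p)"
        using fun_cong[OF e, of \<tau>] by (simp add: \<Phi>_def)
      thus "(\<Sum>p\<in>P. z p ^ \<tau> * (w p - w' p)) = 0"
        by (simp add: right_diff_distrib sum_subtractf)
    qed
    hence "\<forall>q\<in>P. w q - w' q = 0" using vand_zero[OF P inj, of r "\<lambda>p. w p - w' p"] cP by simp
    thus "w = w'" using w w' unfolding A_def by (auto simp: PiE_def extensional_def fun_eq_iff)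
  qed
  have "card (\<Phi> ` A) = card B"
    using card_image[OF injP] P cP by (simp add: A_def B_def card_PiE)
  hence "\<Phi> ` A = B" using sub by (intro card_subset_eq) (auto simp: B_def intro!: finite_PiE)
  moreover have "restrict y {..<r} \<in> B" by (simp add: B_def)
  ultimately obtain w where "\<Phi> w = restrict y {..<r}" by force
  hence "\<forall>\<tau><r. (\<Sum>p\<in>P. z p ^ \<tau> * w p) = y \<tau>"
    by (auto simp: \<Phi>_def fun_eq_iff) (metis lessThan_iff restrict_apply')
  thus ?thesis by blast
qed




lemma sum_app: "(\<Sum>x\<in>A. f x) y = (\<Sum>x\<in>A. f x y)"
  by (induction A rule: infinite_finite_induct) auto

definition codeC :: "nat \<Rightarrow> nat \<Rightarrow> nat \<Rightarrow> nat \<Rightarrow> (nat \<Rightarrow> nat \<Rightarrow> 'a::field) \<Rightarrow> (nat \<Rightarrow> nat \<Rightarrow> 'a) set" where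
  "codeC n k sm s lam = {c \<in> array_vectors n (s * sm ^ n).
                \<forall>a < sm ^ n. \<forall>b < s. \<forall>t \<in> {1..n - k}.
                  (\<Sum>i = 1..n. lam i (digit sm a i) ^ (t - 1) * c i (b * sm ^ n + a)) = 0}"

locale cs =
  fixes n k sm s :: nat and lam :: "nat \<Rightarrow> nat \<Rightarrow> 'a::{field,finite}"
  assumes k1: "1 \<le> k" and kn: "k < n" and sm1: "1 \<le> sm" and s1: "1 \<le> s"
    and lam_inj: "inj_on (\<lambda>(i, j). lam i j) ({1..n} \<times> {0..<sm})"
begin

abbreviation "ell \<equiv> s * sm ^ n"
abbreviation "C \<equiv> codeC n k sm s lam"
definition z where "z t i = lam i (digit sm (t mod sm ^ n) i)"

lemma digit_lt: "digit sm a i < sm"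
  using sm1 by (simp add: digit_def)

lemma lam_eq: "i \<in> {1..n} \<Longrightarrow> j \<in> {1..n} \<Longrightarrow> x < sm \<Longrightarrow> y < sm \<Longrightarrow> lam i x = lam j y \<Longrightarrow> i = j \<and> x = y"
proof -
  assume a: "i \<in> {1..n}" "j \<in> {1..n}" "x < sm" "y < sm" "lam i x = lam j y"
  have "(i,x) = (j,y)" by (rule inj_onD[OF lam_inj]) (use a in auto)
  thus ?thesis by simp
qed

lemma z_inj: "inj_on (z t) {1..n}"
proof (rule inj_onI)
  fix i j assume i: "i \<in> {1..n}" and j: "j \<in> {1..n}" and e: "z t i = z t j"
  from e have "lam i (digit sm (t mod sm ^ n) i) = lam j (digit sm (t mod sm ^ n) j)" by (simp only: z_def)
  from lam_eq[OF i j digit_lt digit_lt this] show "i = j" by simp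
qed

lemma C_iff: "c \<in> C \<longleftrightarrow> c \<in> array_vectors n ell \<and>
   (\<forall>t<ell. \<forall>\<tau><n-k. (\<Sum>i=1..n. z t i ^ \<tau> * c i t) = 0)"
proof
  assume c: "c \<in> C"
  show "c \<in> array_vectors n ell \<and> (\<forall>t<ell. \<forall>\<tau><n-k. (\<Sum>i=1..n. z t i ^ \<tau> * c i t) = 0)"
  proof (intro conjI allI impI)
    show "c \<in> array_vectors n ell" using c by (simp add: codeC_def)
    fix t \<tau> assume t: "t < ell" and \<tau>: "\<tau> < n - k"
    have pos: "sm ^ n > 0" using sm1 by simp
    have a: "t mod sm ^ n < sm ^ n" using pos by simp
    have b: "t div sm ^ n < s" using t pos by (simp add: div_less_iff_less_mult)
    have tt: "t div sm ^ n * sm ^ n + t mod sm ^ n = t" by (rule div_mult_mod_eq)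
    have "Suc \<tau> \<in> {1..n-k}" using \<tau> by simp
    with c a b have "(\<Sum>i = 1..n. lam i (digit sm (t mod sm ^ n) i) ^ (Suc \<tau> - 1) * c i (t div sm ^ n * sm ^ n + t mod sm ^ n)) = 0"
      unfolding codeC_def by blast
    thus "(\<Sum>i=1..n. z t i ^ \<tau> * c i t) = 0" by (simp only: tt z_def diff_Suc_1)
  qed
next
  assume c: "c \<in> array_vectors n ell \<and> (\<forall>t<ell. \<forall>\<tau><n-k. (\<Sum>i=1..n. z t i ^ \<tau> * c i t) = 0)"
  show "c \<in> C" unfolding codeC_def
  proof (intro CollectI conjI allI impI ballI)
    show "c \<in> array_vectors n ell" using c by simp
    fix a b t assume a: "a < sm ^ n" and b: "b < s" and t: "t \<in> {1..n-k}"
    have "b * sm ^ n + a < ell"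
    proof -
      have "b * sm ^ n + a < b * sm ^ n + sm ^ n" using a by simp
      also have "\<dots> = Suc b * sm ^ n" by simp
      also have "\<dots> \<le> s * sm ^ n" using b by (intro mult_right_mono) auto
      finally show ?thesis .
    qed
    moreover have "t - 1 < n - k" using t by auto
    ultimately have "(\<Sum>i=1..n. z (b * sm ^ n + a) i ^ (t - 1) * c i (b * sm ^ n + a)) = 0" using c by blast
    moreover have "(b * sm ^ n + a) mod sm ^ n = a" using a by simp
    ultimately show "(\<Sum>i = 1..n. lam i (digit sm a i) ^ (t - 1) * c i (b * sm ^ n + a)) = 0"
      by (simp add: z_def)
  qed
qed

lemma C_arr: "c \<in> C \<Longrightarrow> (i \<notin> {1..n} \<or> ell \<le> t) \<Longrightarrow> c i t = 0"
  by (simp add: codeC_def array_vectors_def)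

lemma C_eq: "c \<in> C \<Longrightarrow> t < ell \<Longrightarrow> \<tau> < n - k \<Longrightarrow> (\<Sum>i=1..n. z t i ^ \<tau> * c i t) = 0"
  using C_iff by blast

lemma C_lin:
  assumes c: "c \<in> C" and c': "c' \<in> C"
  shows "(\<lambda>i t. x * c i t + y * c' i t) \<in> C"
  unfolding C_iff
proof (intro conjI allI impI)
  show "(\<lambda>i t. x * c i t + y * c' i t) \<in> array_vectors n ell"
    using C_arr[OF c] C_arr[OF c'] by (auto simp: array_vectors_def)
  fix t \<tau> assume t: "t < ell" and \<tau>: "\<tau> < n - k"
  have "(\<Sum>i=1..n. z t i ^ \<tau> * (x * c i t + y * c' i t)) =
        x * (\<Sum>i=1..n. z t i ^ \<tau> * c i t) + y * (\<Sum>i=1..n. z t i ^ \<tau> * c' i t)"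
    by (simp add: sum.distrib sum_distrib_left algebra_simps)
  thus "(\<Sum>i=1..n. z t i ^ \<tau> * (x * c i t + y * c' i t)) = 0"
    using C_eq[OF c t \<tau>] C_eq[OF c' t \<tau>] by simp
qed

lemma C_diff: "c \<in> C \<Longrightarrow> c' \<in> C \<Longrightarrow> (\<lambda>i t. c i t - c' i t) \<in> C"
  using C_lin[of c c' 1 "-1"] by simp

lemma C_zero: "0 \<in> C"
  using C_iff by (simp add: array_vectors_def)

lemma C_add: "c \<in> C \<Longrightarrow> c' \<in> C \<Longrightarrow> c + c' \<in> C"
  using C_lin[of c c' 1 1] by (simp add: plus_fun_def)

lemma C_scale: "c \<in> C \<Longrightarrow> arr_scale x c \<in> C"
  using C_lin[of c 0 x 0] C_zero by (simp add: arr_scale_def)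

lemma C_subspace: "module.subspace arr_scale C"
proof -
  interpret vs: vector_space arr_scale by (rule vector_space_arr_scale)
  show ?thesis by (simp add: vs.subspace_def C_zero C_add C_scale)
qed

lemma C_unique:
  assumes c: "c \<in> C" and c': "c' \<in> C" and K: "K \<subseteq> {1..n}" "card K = k"
    and eq: "\<forall>i\<in>K. c i = c' i"
  shows "c = c'"
proof -
  define e where "e = (\<lambda>i t. c i t - c' i t)"
  have e: "e \<in> C" using C_diff[OF c c'] by (simp add: e_def)
  have "e i t = 0" for i t
  proof (cases "i \<in> {1..n} \<and> t < ell")
    case False thus ?thesis using C_arr[OF e] by auto
  next
    case True
    define P where "P = {1..n} - K"
    have fin: "finite P" by (simp add: P_def)
    have cP: "card P = n - k" using K by (simp add: P_def card_Diff_subset finite_subset)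
    have injP: "inj_on (z t) P" using z_inj by (rule inj_on_subset) (auto simp: P_def)
    have "\<forall>\<tau><n-k. (\<Sum>p\<in>P. z t p ^ \<tau> * e p t) = 0"
    proof (intro allI impI)
      fix \<tau> assume \<tau>: "\<tau> < n - k"
      have "(\<Sum>i=1..n. z t i ^ \<tau> * e i t) = (\<Sum>p\<in>P. z t p ^ \<tau> * e p t) + (\<Sum>p\<in>K. z t p ^ \<tau> * e p t)"
        unfolding P_def by (rule sum.subset_diff[OF K(1)]) simp
      moreover have "(\<Sum>p\<in>K. z t p ^ \<tau> * e p t) = 0" using eq by (simp add: e_def)
      ultimately show "(\<Sum>p\<in>P. z t p ^ \<tau> * e p t) = 0" using C_eq[OF e _ \<tau>] True by simp
    qed
    hence "\<forall>p\<in>P. e p t = 0" using vand_zero[OF fin injP, of "n-k" "\<lambda>p. e p t"] cP by simp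
    thus ?thesis using True eq by (cases "i \<in> K") (auto simp: P_def e_def)
  qed
  thus ?thesis by (auto simp: e_def fun_eq_iff)
qed

lemma C_ext:
  assumes K: "K \<subseteq> {1..n}" "card K = k"
  shows "\<exists>c\<in>C. \<forall>i\<in>K. \<forall>t<ell. c i t = v i t"
proof -
  define P where "P = {1..n} - K"
  have fin: "finite P" by (simp add: P_def)
  have cP: "card P = n - k" using K by (simp add: P_def card_Diff_subset finite_subset)
  have "\<forall>t. \<exists>w. \<forall>\<tau><n-k. (\<Sum>p\<in>P. z t p ^ \<tau> * w p) = - (\<Sum>i\<in>K. z t i ^ \<tau> * v i t)"
  proof
    fix t
    have injP: "inj_on (z t) P" using z_inj by (rule inj_on_subset) (auto simp: P_def)
    show "\<exists>w. \<forall>\<tau><n-k. (\<Sum>p\<in>P. z t p ^ \<tau> * w p) = - (\<Sum>i\<in>K. z t i ^ \<tau> * v i t)"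
      by (rule vand_surj[OF fin injP cP])
  qed
  from choice[OF this] obtain W where W0: "\<forall>t. \<forall>\<tau><n-k. (\<Sum>p\<in>P. z t p ^ \<tau> * W t p) = - (\<Sum>i\<in>K. z t i ^ \<tau> * v i t)"
    by blast
  have W: "\<tau> < n-k \<Longrightarrow> (\<Sum>p\<in>P. z t p ^ \<tau> * W t p) = - (\<Sum>i\<in>K. z t i ^ \<tau> * v i t)" for t \<tau>
    using W0 by blast
  define c where "c = (\<lambda>i t. if i \<in> {1..n} \<and> t < ell then (if i \<in> K then v i t else W t i) else 0)"
  have "c \<in> C" unfolding C_iff
  proof (intro conjI allI impI)
    show "c \<in> array_vectors n ell" by (auto simp: c_def array_vectors_def)
    fix t \<tau> assume t: "t < ell" and \<tau>: "\<tau> < n - k"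
    have "(\<Sum>i=1..n. z t i ^ \<tau> * c i t) = (\<Sum>p\<in>P. z t p ^ \<tau> * c p t) + (\<Sum>p\<in>K. z t p ^ \<tau> * c p t)"
      unfolding P_def by (rule sum.subset_diff[OF K(1)]) simp
    also have "(\<Sum>p\<in>P. z t p ^ \<tau> * c p t) = (\<Sum>p\<in>P. z t p ^ \<tau> * W t p)"
      by (rule sum.cong) (use t in \<open>auto simp: P_def c_def\<close>)
    also have "(\<Sum>p\<in>K. z t p ^ \<tau> * c p t) = (\<Sum>p\<in>K. z t p ^ \<tau> * v p t)"
      by (rule sum.cong) (use t K in \<open>auto simp: c_def\<close>)
    finally show "(\<Sum>i=1..n. z t i ^ \<tau> * c i t) = 0" using W[OF \<tau>, of t] by simp
  qed
  moreover have "\<forall>i\<in>K. \<forall>t<ell. c i t = v i t" using K by (auto simp: c_def)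
  ultimately show ?thesis by blast
qed

end


context cs begin

lemma C_dim: "vector_space.dim arr_scale C = k * ell"
proof -
  interpret vs: vector_space arr_scale by (rule vector_space_arr_scale)
  define K0 where "K0 = {1..k}"
  have K0: "K0 \<subseteq> {1..n}" "card K0 = k" using kn by (auto simp: K0_def)
  define S where "S = K0 \<times> {..<ell}"
  have finS: "finite S" by (simp add: S_def K0_def)
  define ind where "ind p = (\<lambda>(i::nat) (t::nat). if p = (i,t) then (1::'a) else 0)" for p
  define bv where "bv p = (SOME c. c \<in> C \<and> (\<forall>i\<in>K0. \<forall>t<ell. c i t = ind p i t))" for p
  have bv: "bv p \<in> C \<and> (\<forall>i\<in>K0. \<forall>t<ell. bv p i t = ind p i t)" for p
  proof -
    have "\<exists>c. c \<in> C \<and> (\<forall>i\<in>K0. \<forall>t<ell. c i t = ind p i t)" using C_ext[OF K0, of "ind p"] by blast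
    thus ?thesis unfolding bv_def by (rule someI_ex)
  qed
  have bvC: "bv p \<in> C" for p using bv by blast
  have bv_at: "bv p i t = (if p = (i,t) then 1 else 0)" if "i \<in> K0" "t < ell" for p i t
    using bv[of p] that by (simp add: ind_def)
  have inj: "inj_on bv S"
  proof (rule inj_onI)
    fix p p' assume p: "p \<in> S" and p': "p' \<in> S" and e: "bv p = bv p'"
    obtain i t where it: "p = (i,t)" by force
    have "i \<in> K0" "t < ell" using p it by (auto simp: S_def)
    hence b1: "bv p i t = 1" and b2: "bv p' i t = (if p' = (i,t) then 1 else 0)" using bv_at it by auto
    have "bv p' i t = 1" using e b1 by simp
    hence "(if p' = (i,t) then (1::'a) else 0) = 1" using b2 by simp
    hence "p' = (i,t)" by (cases "p' = (i,t)") auto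
    thus "p = p'" using it by simp
  qed
  define B where "B = bv ` S"
  have cardB: "card B = k * ell" unfolding B_def using card_image[OF inj] K0 by (simp add: S_def card_cartesian_product)
  have finB: "finite B" using finS by (simp add: B_def)
  have BC: "B \<subseteq> C" using bvC by (auto simp: B_def)
  have sumeval: "(\<Sum>p\<in>S. x p * bv p i t) = x (i,t)" if "(i,t) \<in> S" for x i t
  proof -
    have it: "i \<in> K0" "t < ell" using that by (auto simp: S_def)
    have "(\<Sum>p\<in>S. x p * bv p i t) = (\<Sum>p\<in>S. if p = (i,t) then x p else 0)"
      by (rule sum.cong) (use bv_at[OF it] in auto)
    also have "\<dots> = x (i,t)" using finS that by (simp add: sum.delta)
    finally show ?thesis .
  qed
  have span: "C \<subseteq> vs.span B"
  proof
    fix c assume c: "c \<in> C"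
    define c' where "c' = (\<Sum>p\<in>S. arr_scale (c (fst p) (snd p)) (bv p))"
    have c'C: "c' \<in> C" unfolding c'_def by (rule vs.subspace_sum[OF C_subspace]) (rule C_scale[OF bvC])
    have c'span: "c' \<in> vs.span B" unfolding c'_def
      by (intro vs.span_sum vs.span_scale vs.span_base) (auto simp: B_def)
    have "\<forall>i\<in>K0. c i = c' i"
    proof (intro ballI ext)
      fix i t assume i: "i \<in> K0"
      show "c i t = c' i t"
      proof (cases "t < ell")
        case True
        have "c' i t = (\<Sum>p\<in>S. c (fst p) (snd p) * bv p i t)"
          by (simp add: c'_def sum_app arr_scale_def)
        also have "\<dots> = c i t" using sumeval[of i t "\<lambda>p. c (fst p) (snd p)"] i True by (simp add: S_def)
        finally show ?thesis by simp
      next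
        case False thus ?thesis using C_arr[OF c] C_arr[OF c'C] by simp
      qed
    qed
    hence "c = c'" using C_unique[OF c c'C K0] by blast
    thus "c \<in> vs.span B" using c'span by simp
  qed
  have indep: "vs.independent B"
  proof
    assume "vs.dependent B"
    then obtain u where u: "\<exists>v\<in>B. u v \<noteq> 0" and s0: "(\<Sum>v\<in>B. arr_scale (u v) v) = 0"
      using vs.dependent_finite[OF finB] by blast
    have s1: "(\<Sum>p\<in>S. arr_scale (u (bv p)) (bv p)) = 0"
      using s0 unfolding B_def by (simp add: sum.reindex[OF inj])
    have "u (bv p) = 0" if p: "p \<in> S" for p
    proof -
      obtain i t where it: "p = (i,t)" by force
      have "0 = (\<Sum>p\<in>S. arr_scale (u (bv p)) (bv p)) i t" using s1 by simp
      also have "\<dots> = (\<Sum>p\<in>S. u (bv p) * bv p i t)" by (simp add: sum_app arr_scale_def)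
      also have "\<dots> = u (bv (i,t))" using sumeval[of i t "\<lambda>p. u (bv p)"] p it by simp
      finally show ?thesis using it by simp
    qed
    thus False using u by (auto simp: B_def)
  qed
  show ?thesis by (rule vs.dim_unique[OF BC span indep cardB])
qed

end



lemma decomp3:
  fixes a q sm :: nat
  shows "a = a mod q + q * ((a div q) mod sm) + q * sm * (a div (q * sm))"
proof -
  have "a = a mod q + q * (a div q)" by simp
  also have "a div q = (a div q) mod sm + sm * ((a div q) div sm)" by simp
  also have "(a div q) div sm = a div (q * sm)" by (simp add: div_mult2_eq)
  finally show ?thesis by (simp add: algebra_simps)
qed

definition abar :: "nat \<Rightarrow> nat \<Rightarrow> nat \<Rightarrow> nat" where
  "abar q sm a = a mod q + q * (a div (q * sm))"

lemma abar_mod: "0 < q \<Longrightarrow> abar q sm a mod q = a mod q"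
  by (simp add: abar_def)

lemma abar_div: "0 < q \<Longrightarrow> abar q sm a div q = a div (q * sm)"
  by (simp add: abar_def)

lemma abar_inj:
  assumes q: "0 < q" and e: "abar q sm a = abar q sm a'" and d: "(a div q) mod sm = (a' div q) mod sm"
  shows "a = a'"
proof -
  have "a mod q = a' mod q" using abar_mod[OF q, of sm a] abar_mod[OF q, of sm a'] e by simp
  moreover have "a div (q*sm) = a' div (q*sm)" using abar_div[OF q, of sm a] abar_div[OF q, of sm a'] e by simp
  ultimately show ?thesis using decomp3[of a q sm] decomp3[of a' q sm] d by simp
qed

lemma abar_lt:
  assumes sm: "1 \<le> sm" and h: "1 \<le> h" "h \<le> n" and a: "a < sm ^ n"
  shows "abar (sm ^ (h - 1)) sm a < sm ^ (n - 1)"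
proof -
  define q where "q = sm ^ (h - 1)"
  have q: "0 < q" using sm by (simp add: q_def)
  have "n = (h - 1) + 1 + (n - h)" using h by simp
  hence n: "sm ^ n = q * sm * sm ^ (n - h)"
    unfolding q_def by (metis power_add power_one_right)
  have "a div (q * sm) < sm ^ (n - h)"
    using a n q sm by (simp add: div_less_iff_less_mult mult.commute)
  hence "Suc (a div (q * sm)) \<le> sm ^ (n - h)" by simp
  have "abar q sm a < q + q * (a div (q * sm))" using q by (simp add: abar_def)
  also have "\<dots> = q * Suc (a div (q * sm))" by simp
  also have "\<dots> \<le> q * sm ^ (n - h)" using mult_le_mono2[OF \<open>Suc (a div (q * sm)) \<le> sm ^ (n - h)\<close>, of q] by simp
  also have "\<dots> = sm ^ (n - 1)"
  proof -
    have "n - 1 = (h - 1) + (n - h)" using h by simp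
    thus ?thesis unfolding q_def by (metis power_add)
  qed
  finally show ?thesis by (simp add: q_def)
qed

lemma digit_other:
  assumes sm: "1 \<le> sm" and j: "1 \<le> j" "j \<noteq> h" and h: "1 \<le> h"
    and e1: "a mod sm ^ (h - 1) = a' mod sm ^ (h - 1)"
    and e2: "a div (sm ^ (h - 1) * sm) = a' div (sm ^ (h - 1) * sm)"
  shows "digit sm a j = digit sm a' j"
proof (cases "j < h")
  case True
  have key: "digit sm x j = (x mod sm ^ j) div sm ^ (j - 1)" for x
  proof -
    have "j = (j - 1) + 1" using j by simp
    hence "sm ^ j = sm ^ (j - 1) * sm" by (metis power_add power_one_right)
    hence "x mod sm ^ j = sm ^ (j - 1) * (x div sm ^ (j - 1) mod sm) + x mod sm ^ (j - 1)"
      by (simp add: mod_mult2_eq)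
    moreover have "0 < sm ^ (j - 1)" using sm by simp
    ultimately have "(x mod sm ^ j) div sm ^ (j - 1) = x div sm ^ (j - 1) mod sm"
      by (metis add.commute div_mult_self2 div_less mod_less_divisor add_0 not_less0 neq0_conv)
    thus ?thesis by (simp add: digit_def)
  qed
  have dv: "sm ^ j dvd sm ^ (h - 1)" using True by (intro le_imp_power_dvd) simp
  have "a mod sm ^ j = a' mod sm ^ j"
    using e1 mod_mod_cancel[OF dv, of a] mod_mod_cancel[OF dv, of a'] by simp
  thus ?thesis using key by simp
next
  case False
  hence jh: "h < j" using j by simp
  have "j - 1 = (h - 1) + 1 + (j - 1 - h)" using jh h by simp
  hence "sm ^ (j - 1) = (sm ^ (h - 1) * sm) * sm ^ (j - 1 - h)"
    by (metis power_add power_one_right)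
  hence "x div sm ^ (j - 1) = x div (sm ^ (h - 1) * sm) div sm ^ (j - 1 - h)" for x
    by (simp add: div_mult2_eq)
  thus ?thesis using e2 by (simp add: digit_def)
qed



context cs begin

lemma repair:
  assumes dk: "k < d'" and dn: "d' \<le> n - 1" and sle: "d' - k + 1 \<le> sm"
    and sdvd: "(d' - k + 1) dvd (s * sm)"
  shows "optimal_repair n k ell C 1 d'"
  unfolding optimal_repair_def
proof (intro allI impI)
  fix H R assume HR: "H \<subseteq> {1..n} \<and> card H = 1 \<and> R \<subseteq> {1..n} - H \<and> card R = d'"
  from HR obtain h where Hh: "H = {h}" by (meson card_1_singletonE)
  have h: "1 \<le> h" "h \<le> n" using HR Hh by auto
  have R: "R \<subseteq> {1..n} - {h}" "card R = d'" using HR Hh by auto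
  define s' where "s' = d' - k + 1"
  have s'pos: "0 < s'" by (simp add: s'_def)
  define \<beta> where "\<beta> = 1 * ell div (d' - k + 1)"
  define q where "q = sm ^ (h - 1)"
  have qpos: "0 < q" using sm1 by (simp add: q_def)
  define M where "M = sm ^ (n - 1)"
  have Mpos: "0 < M" using sm1 by (simp add: M_def)
  have smpos: "0 < sm ^ n" using sm1 by simp
  define A where "A t = t mod sm ^ n" for t
  define ab where "ab t = abar q sm (A t)" for t
  define D where "D t = (A t div q) mod sm" for t
  define p where "p t = t div sm ^ n * sm + D t" for t
  define key where "key t = ab t + M * (p t div s')" for t
  define f where "f = (\<lambda>(j::nat) (x::nat \<Rightarrow> 'a) (u::nat). \<Sum>t\<in>{t. t < ell \<and> key t = u}. x t)"
  define msg where "msg c = (\<lambda>j u. if j \<in> R \<and> u < \<beta> then f j (c j) u else 0)" for c :: "nat \<Rightarrow> nat \<Rightarrow> 'a"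
  define g where "g Mg = (\<lambda>i. (SOME c. c \<in> C \<and> msg c = Mg) i)" for Mg :: "nat \<Rightarrow> nat \<Rightarrow> 'a"
  have A_lt: "A t < sm ^ n" for t using smpos by (simp add: A_def)
  have D_digit: "D t = digit sm (A t) h" for t by (simp add: D_def digit_def q_def)
  have z_h: "z t h = lam h (D t)" for t by (simp add: z_def D_digit A_def)
  have ab_lt: "ab t < M" for t
    using abar_lt[OF sm1 h A_lt[of t]] by (simp add: ab_def q_def M_def)
  have D_lt: "D t < sm" for t using sm1 by (simp add: D_def)
  have pmod: "p t mod sm = D t" for t using D_lt[of t] by (simp add: p_def)
  have key_lt: "key t < \<beta>" if t: "t < ell" for t
  proof -
    obtain Q where Q: "s * sm = s' * Q" using sdvd by (auto simp: s'_def dvd_def)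
    have b: "t div sm ^ n < s" using t smpos by (simp add: div_less_iff_less_mult)
    have "p t < (t div sm ^ n + 1) * sm" using D_lt[of t] by (simp add: p_def)
    also have "\<dots> \<le> s * sm" using b by (intro mult_right_mono) auto
    finally have "p t < s' * Q" using Q by simp
    hence "p t div s' < Q" using s'pos by (simp add: div_less_iff_less_mult mult.commute)
    hence "Suc (p t div s') \<le> Q" by simp
    have "key t < M + M * (p t div s')" using ab_lt[of t] by (simp add: key_def)
    also have "\<dots> = M * Suc (p t div s')" by simp
    also have "\<dots> \<le> M * Q" using mult_le_mono2[OF \<open>Suc (p t div s') \<le> Q\<close>] by simp
    also have "M * Q = \<beta>"
    proof -
      have "n = 1 + (n - 1)" using kn by simp
      hence "sm ^ n = sm * M" unfolding M_def by (metis power_add power_one_right)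
      hence "ell = s' * (Q * M)" using Q by (simp add: mult.assoc mult.left_commute)
      hence "ell div s' = Q * M" using s'pos by simp
      moreover have "\<beta> = ell div s'" unfolding \<beta>_def s'_def by simp
      ultimately show ?thesis by (simp add: mult.commute)
    qed
    finally show ?thesis .
  qed
  have key_eq: "ab t = ab t' \<and> p t div s' = p t' div s'" if "key t = key t'" for t t'
  proof -
    have "key t mod M = ab t" "key t' mod M = ab t'" using ab_lt by (simp_all add: key_def)
    moreover have "key t div M = p t div s'" "key t' div M = p t' div s'"
      using ab_lt Mpos by (simp_all add: key_def)
    ultimately show ?thesis using that by metis
  qed
  have same_t: "t = t'" if "key t = key t'" "D t = D t'" for t t'
  proof -
    have e1: "ab t = ab t'" and e2: "p t div s' = p t' div s'" using key_eq[OF that(1)] by auto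
    have lt: "p x < p y + s'" if "p x div s' = p y div s'" for x y
    proof -
      have "p x < p x div s' * s' + s'" using s'pos by (metis div_mult_mod_eq add_less_cancel_left mod_less_divisor)
      also have "\<dots> = p y div s' * s' + s'" using that by simp
      also have "\<dots> \<le> p y + s'" by simp
      finally show ?thesis .
    qed
    have bb: "t div sm ^ n \<le> t' div sm ^ n" if "p x div s' = p y div s'" "D x = D y" "x = t" "y = t'" for x y
    proof -
      have "x div sm ^ n * sm + D x < y div sm ^ n * sm + D x + sm"
        using lt[OF that(1)] sle that(2) by (simp add: p_def s'_def)
      hence "x div sm ^ n * sm < (y div sm ^ n + 1) * sm" by simp
      hence "x div sm ^ n < y div sm ^ n + 1" by (meson mult_less_cancel2)
      thus ?thesis using that by simp
    qed
    have bb2: "t' div sm ^ n \<le> t div sm ^ n"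
    proof -
      have "t' div sm ^ n * sm + D t' < t div sm ^ n * sm + D t' + sm"
        using lt[OF e2[symmetric]] sle that(2) by (simp add: p_def s'_def)
      hence "t' div sm ^ n * sm < (t div sm ^ n + 1) * sm" by simp
      hence "t' div sm ^ n < t div sm ^ n + 1" by (meson mult_less_cancel2)
      thus ?thesis by simp
    qed
    have "t div sm ^ n = t' div sm ^ n" using bb[OF e2 that(2) refl refl] bb2 by simp
    moreover have "A t = A t'"
      using abar_inj[OF qpos, of sm "A t" "A t'"] e1 that(2) by (simp add: ab_def D_def)
    ultimately show ?thesis by (metis A_def div_mult_mod_eq)
  qed
  have z_other: "z t j = z t' j" if "key t = key t'" "j \<in> {1..n}" "j \<noteq> h" for t t' j
  proof -
    have e1: "ab t = ab t'" using key_eq[OF that(1)] by auto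
    have m1: "A t mod q = A t' mod q"
      using abar_mod[OF qpos, of sm "A t"] abar_mod[OF qpos, of sm "A t'"] e1 by (simp add: ab_def)
    have m2: "A t div (q * sm) = A t' div (q * sm)"
      using abar_div[OF qpos, of sm "A t"] abar_div[OF qpos, of sm "A t'"] e1 by (simp add: ab_def)
    have j1: "1 \<le> j" using that(2) by simp
    have "digit sm (A t) j = digit sm (A t') j"
      by (rule digit_other[OF sm1 j1 that(3) h(1)]) (use m1 m2 in \<open>simp_all only: q_def\<close>)
    thus ?thesis by (simp add: z_def A_def)
  qed
  have rep0: "e h t0 = 0" if eC: "e \<in> C" and msg0: "\<forall>j\<in>R. \<forall>u<\<beta>. f j (e j) u = 0" for e t0
  proof (cases "t0 < ell")
    case False thus ?thesis using C_arr[OF eC] by simp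
  next
    case True
    define G where "G = {t. t < ell \<and> key t = key t0}"
    define N where "N = {1..n} - {h} - R"
    define Y where "Y j = (\<Sum>t\<in>G. e j t)" for j
    have finG: "finite G" by (simp add: G_def)
    have t0G: "t0 \<in> G" using True by (simp add: G_def)
    have YR: "Y j = 0" if "j \<in> R" for j
    proof -
      have "Y j = f j (e j) (key t0)" by (simp add: Y_def f_def G_def)
      thus ?thesis using msg0 that key_lt[OF True] by simp
    qed
    have eqs: "(\<Sum>t\<in>G. z t h ^ \<tau> * e h t) + (\<Sum>j\<in>N. z t0 j ^ \<tau> * Y j) = 0" if \<tau>: "\<tau> < n - k" for \<tau>
    proof -
      have "0 = (\<Sum>t\<in>G. \<Sum>j=1..n. z t j ^ \<tau> * e j t)"
      proof (rule sym, rule sum.neutral, rule ballI)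
        fix t assume "t \<in> G"
        hence "t < ell" by (simp add: G_def)
        thus "(\<Sum>j=1..n. z t j ^ \<tau> * e j t) = 0" by (rule C_eq[OF eC _ \<tau>])
      qed
      also have "\<dots> = (\<Sum>j=1..n. \<Sum>t\<in>G. z t j ^ \<tau> * e j t)" by (rule sum.swap)
      also have "\<dots> = (\<Sum>t\<in>G. z t h ^ \<tau> * e h t) + (\<Sum>j\<in>{1..n}-{h}. \<Sum>t\<in>G. z t j ^ \<tau> * e j t)"
        by (rule sum.remove) (use h in auto)
      also have "(\<Sum>j\<in>{1..n}-{h}. \<Sum>t\<in>G. z t j ^ \<tau> * e j t) = (\<Sum>j\<in>{1..n}-{h}. z t0 j ^ \<tau> * Y j)"
      proof (rule sum.cong[OF refl])
        fix j assume j: "j \<in> {1..n} - {h}"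
        have "(\<Sum>t\<in>G. z t j ^ \<tau> * e j t) = (\<Sum>t\<in>G. z t0 j ^ \<tau> * e j t)"
        proof (rule sum.cong[OF refl])
          fix t assume "t \<in> G"
          hence kt: "key t = key t0" by (simp add: G_def)
          have j1: "j \<in> {1..n}" "j \<noteq> h" using j by auto
          show "z t j ^ \<tau> * e j t = z t0 j ^ \<tau> * e j t" using z_other[OF kt j1] by simp
        qed
        thus "(\<Sum>t\<in>G. z t j ^ \<tau> * e j t) = z t0 j ^ \<tau> * Y j" by (simp add: Y_def sum_distrib_left)
      qed
      also have "\<dots> = (\<Sum>j\<in>N. z t0 j ^ \<tau> * Y j) + (\<Sum>j\<in>R. z t0 j ^ \<tau> * Y j)"
        unfolding N_def by (rule sum.subset_diff[OF R(1)]) simp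
      also have "(\<Sum>j\<in>R. z t0 j ^ \<tau> * Y j) = 0" using YR by simp
      finally show ?thesis by simp
    qed
    define P where "P = Inl ` G \<union> Inr ` N"
    define Z where "Z = case_sum (\<lambda>t. z t h) (\<lambda>j. z t0 j)"
    define W where "W = case_sum (\<lambda>t. e h t) Y"
    have finN: "finite N" by (simp add: N_def)
    have finP: "finite P" using finG finN by (simp add: P_def)
    have sumP: "(\<Sum>x\<in>P. Z x ^ \<tau> * W x) = (\<Sum>t\<in>G. z t h ^ \<tau> * e h t) + (\<Sum>j\<in>N. z t0 j ^ \<tau> * Y j)" for \<tau>
    proof -
      have "(\<Sum>x\<in>P. Z x ^ \<tau> * W x) = (\<Sum>x\<in>Inl ` G. Z x ^ \<tau> * W x) + (\<Sum>x\<in>Inr ` N. Z x ^ \<tau> * W x)"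
        unfolding P_def by (rule sum.union_disjoint) (use finG finN in auto)
      also have "(\<Sum>x\<in>Inl ` G. Z x ^ \<tau> * W x) = (\<Sum>t\<in>G. z t h ^ \<tau> * e h t)"
        by (simp add: sum.reindex Z_def W_def)
      also have "(\<Sum>x\<in>Inr ` N. Z x ^ \<tau> * W x) = (\<Sum>j\<in>N. z t0 j ^ \<tau> * Y j)"
        by (simp add: sum.reindex Z_def W_def)
      finally show ?thesis .
    qed
    have injp: "inj_on p G"
    proof (rule inj_onI)
      fix x y assume x: "x \<in> G" and y: "y \<in> G" and e: "p x = p y"
      have "D x = D y" using pmod[of x] pmod[of y] e by simp
      moreover have "key x = key y" using x y by (simp add: G_def)
      ultimately show "x = y" using same_t by blast
    qed
    have cardG: "card G \<le> s'"
    proof -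
      define g0 where "g0 = p t0 div s'"
      have "p ` G \<subseteq> {g0 * s' ..< g0 * s' + s'}"
      proof
        fix y assume "y \<in> p ` G"
        then obtain x where x: "x \<in> G" and y: "y = p x" by auto
        have "p x div s' = g0" using key_eq[of x t0] x by (simp add: G_def g0_def)
        thus "y \<in> {g0 * s' ..< g0 * s' + s'}" using y s'pos
          by (metis atLeastLessThan_iff div_mult_mod_eq add_less_cancel_left le_add1 mod_less_divisor)
      qed
      hence "card (p ` G) \<le> s'" using card_mono[of "{g0 * s' ..< g0 * s' + s'}" "p ` G"] by simp
      thus ?thesis using card_image[OF injp] by simp
    qed
    have cardN: "card N = n - 1 - d'"
    proof -
      have "card ({1..n} - {h}) = n - 1" using h by simp
      moreover have "card N = card ({1..n} - {h}) - card R"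
        unfolding N_def by (rule card_Diff_subset) (use R finite_subset in auto)
      ultimately show ?thesis using R by simp
    qed
    have cardP: "card P \<le> n - k"
    proof -
      have "card P = card (Inl ` G :: (nat + nat) set) + card (Inr ` N :: (nat + nat) set)"
        unfolding P_def by (rule card_Un_disjoint) (use finG finN in auto)
      also have "\<dots> = card G + card N" by (simp add: card_image)
      finally show ?thesis using cardG cardN dk dn by (simp add: s'_def)
    qed
    have injZ: "inj_on Z P"
    proof (rule inj_onI)
      fix x y assume x: "x \<in> P" and y: "y \<in> P" and e: "Z x = Z y"
      show "x = y"
      proof (cases x)
        case (Inl t)
        hence t: "t \<in> G" using x by (auto simp: P_def)
        show ?thesis
        proof (cases y)
          case (Inl t')
          hence t': "t' \<in> G" using y by (auto simp: P_def)
          have "lam h (D t) = lam h (D t')" using e Inl \<open>x = Inl t\<close> by (simp add: Z_def z_h)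
          hence "D t = D t'" using lam_eq[OF _ _ D_lt D_lt] h by auto
          moreover have "key t = key t'" using t t' by (simp add: G_def)
          ultimately show ?thesis using same_t \<open>x = Inl t\<close> Inl by simp
        next
          case (Inr j)
          hence j: "j \<in> N" using y by (auto simp: P_def)
          have "lam h (D t) = lam j (digit sm (t0 mod sm ^ n) j)"
          proof -
            have "z t h = z t0 j" using e Inr \<open>x = Inl t\<close> by (simp add: Z_def)
            thus ?thesis by (simp only: z_h) (simp add: z_def)
          qed
          hence "h = j" using lam_eq[OF _ _ D_lt digit_lt] h j by (auto simp: N_def)
          thus ?thesis using j by (simp add: N_def)
        qed
      next
        case (Inr j)
        hence j: "j \<in> N" using x by (auto simp: P_def)
        show ?thesis
        proof (cases y)
          case (Inl t)
          have "lam h (D t) = lam j (digit sm (t0 mod sm ^ n) j)"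
          proof -
            have "z t h = z t0 j" using e Inl \<open>x = Inr j\<close> by (simp add: Z_def)
            thus ?thesis by (simp only: z_h) (simp add: z_def)
          qed
          hence "h = j" using lam_eq[OF _ _ D_lt digit_lt] h j by (auto simp: N_def)
          thus ?thesis using j by (simp add: N_def)
        next
          case (Inr j')
          hence j': "j' \<in> N" using y by (auto simp: P_def)
          have "z t0 j = z t0 j'" using e Inr \<open>x = Inr j\<close> by (simp add: Z_def)
          hence "j = j'" using inj_onD[OF z_inj] j j' by (auto simp: N_def)
          thus ?thesis using Inr \<open>x = Inr j\<close> by simp
        qed
      qed
    qed
    have "\<forall>\<tau><n-k. (\<Sum>x\<in>P. Z x ^ \<tau> * W x) = 0" using sumP eqs by simp
    hence "W (Inl t0) = 0" using vand_zero[OF finP injZ cardP] t0G by (simp add: P_def)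
    thus ?thesis by (simp add: W_def)
  qed
  have main: "\<forall>c\<in>C. \<forall>i\<in>H. c i = g (\<lambda>j u. if j \<in> R \<and> u < 1 * ell div (d' - k + 1) then f j (c j) u else 0) i"
  proof (intro ballI)
    fix c i assume c: "c \<in> C" and i: "i \<in> H"
    hence ih: "i = h" using Hh by simp
    define c' where "c' = (SOME c'. c' \<in> C \<and> msg c' = msg c)"
    have c': "c' \<in> C \<and> msg c' = msg c" unfolding c'_def by (rule someI[of _ c]) (use c in simp)
    define e where "e = (\<lambda>i t. c i t - c' i t)"
    have eC: "e \<in> C" using C_diff[OF c] c' by (simp add: e_def)
    have "\<forall>j\<in>R. \<forall>u<\<beta>. f j (e j) u = 0"
    proof (intro ballI allI impI)
      fix j u assume j: "j \<in> R" and u: "u < \<beta>"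
      have "msg c' j u = msg c j u" using c' by simp
      hence "f j (c' j) u = f j (c j) u" using j u by (simp add: msg_def)
      moreover have "f j (e j) u = f j (c j) u - f j (c' j) u" by (simp add: f_def e_def sum_subtractf)
      ultimately show "f j (e j) u = 0" by simp
    qed
    hence "\<forall>t. e h t = 0" using rep0[OF eC] by blast
    hence "c h = c' h" by (auto simp: e_def fun_eq_iff)
    moreover have "g (msg c) h = c' h" by (simp add: g_def c'_def)
    ultimately show "c i = g (\<lambda>j u. if j \<in> R \<and> u < 1 * ell div (d' - k + 1) then f j (c j) u else 0) i"
      using ih by (simp add: msg_def \<beta>_def)
  qed
  show "\<exists>(f :: nat \<Rightarrow> (nat \<Rightarrow> 'a) \<Rightarrow> nat \<Rightarrow> 'a) g. \<forall>c\<in>C. \<forall>i\<in>H. c i = g (\<lambda>j u. if j \<in> R \<and> u < 1 * ell div (d' - k + 1) then f j (c j) u else 0) i"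
    by (rule exI, rule exI, rule main)
qed

end



theorem theorem1:
  fixes n k m :: nat
    and d :: "nat \<Rightarrow> nat"
    and lam :: "nat \<Rightarrow> nat \<Rightarrow> 'a::{field,finite}"
  assumes "1 \<le> k" and "k < n" and "1 \<le> m"
    and "k < d 1"
    and "\<And>i. 1 \<le> i \<Longrightarrow> i < m \<Longrightarrow> d i < d (Suc i)"
    and "d m \<le> n - 1"
    and "card (UNIV :: 'a set) \<ge> (d m - k + 1) * n"
    and "inj_on (\<lambda>(i, j). lam i j) ({1..n} \<times> {0..<d m - k + 1})"
  shows
    "let r = n - k;
         sm = d m - k + 1;
         s = Lcm ((\<lambda>i. d i - k + 1) ` {1..<m});
         ell = s * sm ^ n;
         C1 = {c \<in> array_vectors n ell.
                \<forall>a < sm ^ n. \<forall>b < s. \<forall>t \<in> {1..r}.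
                  (\<Sum>i = 1..n. lam i (digit sm a i) ^ (t - 1) * c i (b * sm ^ n + a)) = 0}
     in MDS_array_code n k ell C1 \<and> (\<forall>i \<in> {1..m}. optimal_repair n k ell C1 1 (d i))"
proof -
  define sm where "sm = d m - k + 1"
  define s where "s = Lcm ((\<lambda>i. d i - k + 1) ` {1..<m})"
  have mono: "d i \<le> d j" if ij: "i \<le> j" and i1: "1 \<le> i" and jm: "j \<le> m" for i j
    using ij jm
  proof (induction j rule: dec_induct)
    case base thus ?case by simp
  next
    case (step x)
    have "d x < d (Suc x)" using assms(5)[of x] step i1 by simp
    thus ?case using step by simp
  qed
  have s1: "1 \<le> s"
  proof -
    have "s \<noteq> 0" unfolding s_def by (subst Lcm_0_iff) auto
    thus ?thesis by simp
  qed
  have sm1: "1 \<le> sm" by (simp add: sm_def)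
  interpret cs n k sm s lam
    using assms(1,2,8) s1 sm1 by unfold_locales (simp_all add: sm_def)
  have mds: "MDS_array_code n k ell C"
    unfolding MDS_array_code_def
  proof (intro conjI allI impI ballI)
    show "C \<subseteq> array_vectors n ell" by (auto simp: codeC_def)
    show "module.subspace arr_scale C" by (rule C_subspace)
    show "vector_space.dim arr_scale C = k * ell" by (rule C_dim)
    fix K c c' assume K: "K \<subseteq> {1..n} \<and> card K = k" and c: "c \<in> C" and c': "c' \<in> C"
      and eq: "\<forall>i\<in>K. c i = c' i"
    show "c = c'" using C_unique[OF c c'] K eq by blast
  qed
  have rep: "\<forall>i\<in>{1..m}. optimal_repair n k ell C 1 (d i)"
  proof
    fix i assume i: "i \<in> {1..m}"
    have dk: "k < d i" using mono[of 1 i] i assms(4) by auto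
    have dm: "d i \<le> d m" using mono[of i m] i by auto
    have dn: "d i \<le> n - 1" using dm assms(6) by simp
    have sle: "d i - k + 1 \<le> sm" using dm by (simp add: sm_def)
    have sdvd: "(d i - k + 1) dvd (s * sm)"
    proof (cases "i < m")
      case True
      hence "(d i - k + 1) dvd s" unfolding s_def using i by (intro dvd_Lcm) auto
      thus ?thesis by simp
    next
      case False
      hence "i = m" using i by simp
      thus ?thesis unfolding sm_def by (metis dvd_triv_right)
    qed
    show "optimal_repair n k ell C 1 (d i)" by (rule repair[OF dk dn sle sdvd])
  qed
  show ?thesis using mds rep by (simp only: Let_def codeC_def sm_def s_def)
qed


end
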